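(* Let $(x_n)_{n<\omega}$ be an almost overcomplete sequence in a real normed space $X$. If $x_n \to x$ weakly, then $x_n \to x$ in norm.
   Context: A sequence in a normed space $X$ is almost overcomplete if the closed linear span of every subsequence of it has finite codimension in $X$. *)

theory Defs
  imports "HOL-Analysis.Analysis"
begin

text \<open>A subset Y of a real vector space has finite codimension if finitely many
vectors together with Y span the whole space (for a linear subspace Y this is
exactly dim(X/Y) < infinity).\<close>
definition finite_codim :: "'a::real_vector set \<Rightarrow> bool" where
  "finite_codim Y \<longleftrightarrow> (\<exists>F. finite F \<and> span (Y \<union> F) = UNIV)"

definition almost_overcomplete :: "(nat \<Rightarrow> 'a::real_normed_vector) \<Rightarrow> bool" where
  "almost_overcomplete x \<longleftrightarrow>
     (\<forall>\<sigma>::nat \<Rightarrow> nat. strict_mono \<sigma> \<longrightarrow> finite_codim (closure (span (range (x \<circ> \<sigma>)))))"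

definition weakly_tendsto :: "(nat \<Rightarrow> 'a::real_normed_vector) \<Rightarrow> 'a \<Rightarrow> bool" where
  "weakly_tendsto x l \<longleftrightarrow>
     (\<forall>f::'a \<Rightarrow> real. bounded_linear f \<longrightarrow> (\<lambda>n. f (x n)) \<longlonglongrightarrow> f l)"

end

theory Submission
  imports Defs
begin


definition hbgood :: "real \<Rightarrow> ('a::real_normed_vector \<times> real) set \<Rightarrow> bool" where
  "hbgood C G \<longleftrightarrow> (\<forall>x a b. (x,a)\<in>G \<longrightarrow> (x,b)\<in>G \<longrightarrow> a = b) \<and>
     (\<forall>x a y b. (x,a)\<in>G \<longrightarrow> (y,b)\<in>G \<longrightarrow> (x+y, a+b) \<in> G) \<and>
     (\<forall>x a c. (x,a)\<in>G \<longrightarrow> (c *\<^sub>R x, c*a) \<in> G) \<and>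
     (\<forall>x a. (x,a)\<in>G \<longrightarrow> a \<le> C * norm x)"

lemma hbgoodD:
  assumes "hbgood C G"
  shows "\<And>x a b. (x,a)\<in>G \<Longrightarrow> (x,b)\<in>G \<Longrightarrow> a = b"
    and "\<And>x a y b. (x,a)\<in>G \<Longrightarrow> (y,b)\<in>G \<Longrightarrow> (x+y, a+b) \<in> G"
    and "\<And>x a c. (x,a)\<in>G \<Longrightarrow> (c *\<^sub>R x, c*a) \<in> G"
    and "\<And>x a. (x,a)\<in>G \<Longrightarrow> a \<le> C * norm x"
  using assms unfolding hbgood_def by blast+

lemma hb_step:
  fixes G :: "('a::real_normed_vector \<times> real) set"
  assumes C: "C \<ge> 0" and good: "hbgood C G" and ne: "G \<noteq> {}" and x0: "x0 \<notin> fst ` G"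
  shows "\<exists>G'. hbgood C G' \<and> G \<subseteq> G' \<and> G' \<noteq> G"
proof -
  have sv: "\<And>x a b. (x,a)\<in>G \<Longrightarrow> (x,b)\<in>G \<Longrightarrow> a = b"
    and ad: "\<And>x a y b. (x,a)\<in>G \<Longrightarrow> (y,b)\<in>G \<Longrightarrow> (x+y, a+b) \<in> G"
    and sc: "\<And>x a c. (x,a)\<in>G \<Longrightarrow> (c *\<^sub>R x, c*a) \<in> G"
    and bd: "\<And>x a. (x,a)\<in>G \<Longrightarrow> a \<le> C * norm x"
    using good unfolding hbgood_def by blast+
  define L where "L = {a - C * norm (u - x0) | u a. (u,a)\<in>G}"
  define \<xi> where "\<xi> = Sup L"
  have key: "a - C * norm (u - x0) \<le> C * norm (v + x0) - b" if "(u,a)\<in>G" "(v,b)\<in>G" for u a v b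
  proof -
    have "a + b \<le> C * norm (u + v)" using bd[OF ad[OF that]] .
    also have "norm (u + v) \<le> norm (u - x0) + norm (v + x0)"
      using norm_triangle_ineq[of "u - x0" "v + x0"] by simp
    finally show ?thesis using C by (smt (verit) mult_left_mono distrib_left)
  qed
  obtain v b where vb: "(v,b)\<in>G" using ne by auto
  have Lne: "L \<noteq> {}" using vb unfolding L_def by auto
  have Lbdd: "bdd_above L" unfolding L_def bdd_above_def using key[OF _ vb] by blast
  have xi_ge: "a - C * norm (u - x0) \<le> \<xi>" if "(u,a)\<in>G" for u a
    unfolding \<xi>_def by (rule cSup_upper[OF _ Lbdd]) (use that L_def in auto)
  have xi_le: "\<xi> \<le> C * norm (v + x0) - b" if "(v,b)\<in>G" for v b
    unfolding \<xi>_def by (rule cSup_least[OF Lne]) (use that key L_def in auto)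
  define G' where "G' = {(y + t *\<^sub>R x0, a + t*\<xi>) | y a t. (y,a)\<in>G}"
  have "hbgood C G'"
    unfolding hbgood_def
  proof (intro conjI allI impI)
    fix x a b assume xa: "(x,a)\<in>G'" and xb: "(x,b)\<in>G'"
    from xa obtain y1 a1 t1 where 1: "(y1,a1)\<in>G" "x = y1 + t1 *\<^sub>R x0" "a = a1 + t1*\<xi>"
      unfolding G'_def by auto
    from xb obtain y2 a2 t2 where 2: "(y2,a2)\<in>G" "x = y2 + t2 *\<^sub>R x0" "b = a2 + t2*\<xi>"
      unfolding G'_def by auto
    have "t1 = t2"
    proof (rule ccontr)
      assume ne: "t1 \<noteq> t2"
      have "(y1 + (-1) *\<^sub>R y2, a1 + (-1)*a2) \<in> G" using ad[OF 1(1) sc[OF 2(1)]] .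
      from sc[OF this, of "1/(t2 - t1)"]
      have "((1/(t2-t1)) *\<^sub>R (y1 + (-1) *\<^sub>R y2), (1/(t2 - t1)) * (a1 + (-1)*a2)) \<in> G" .
      moreover have "(1/(t2-t1)) *\<^sub>R (y1 + (-1) *\<^sub>R y2) = x0"
      proof -
        have "y1 - y2 = (t2 - t1) *\<^sub>R x0" using 1(2) 2(2) by (simp add: algebra_simps)
        then show ?thesis using ne by simp
      qed
      ultimately have "x0 \<in> fst ` G" by force
      with x0 show False by simp
    qed
    then have "y1 = y2" using 1(2) 2(2) by simp
    then show "a = b" using 1 2 sv \<open>t1 = t2\<close> by auto
  next
    fix x a y b assume xa: "(x,a)\<in>G'" and yb: "(y,b)\<in>G'"
    from xa obtain y1 a1 t1 where 1: "(y1,a1)\<in>G" "x = y1 + t1 *\<^sub>R x0" "a = a1 + t1*\<xi>"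
      unfolding G'_def by auto
    from yb obtain y2 a2 t2 where 2: "(y2,a2)\<in>G" "y = y2 + t2 *\<^sub>R x0" "b = a2 + t2*\<xi>"
      unfolding G'_def by auto
    have "(y1+y2, a1+a2)\<in>G" using ad 1 2 by blast
    moreover have "x + y = (y1+y2) + (t1+t2) *\<^sub>R x0" "a + b = (a1+a2) + (t1+t2)*\<xi>"
      using 1 2 by (auto simp: algebra_simps)
    ultimately show "(x+y, a+b)\<in>G'" unfolding G'_def by blast
  next
    fix x a c assume "(x,a)\<in>G'"
    then obtain y1 a1 t1 where 1: "(y1,a1)\<in>G" "x = y1 + t1 *\<^sub>R x0" "a = a1 + t1*\<xi>"
      unfolding G'_def by auto
    have "(c *\<^sub>R y1, c*a1)\<in>G" using sc 1 by blast
    moreover have "c *\<^sub>R x = c *\<^sub>R y1 + (c*t1) *\<^sub>R x0" "c*a = c*a1 + (c*t1)*\<xi>"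
      using 1 by (auto simp: algebra_simps)
    ultimately show "(c *\<^sub>R x, c*a)\<in>G'" unfolding G'_def by blast
  next
    fix x a assume "(x,a)\<in>G'"
    then obtain y a1 t where 1: "(y,a1)\<in>G" "x = y + t *\<^sub>R x0" "a = a1 + t*\<xi>"
      unfolding G'_def by auto
    consider "t = 0" | "t > 0" | "t < 0" by linarith
    then show "a \<le> C * norm x"
    proof cases
      case 1 then show ?thesis using bd \<open>(y,a1)\<in>G\<close> \<open>x = _\<close> \<open>a = _\<close> by simp
    next
      case 2
      have "((1/t) *\<^sub>R y, (1/t)*a1) \<in> G" using sc 1 by blast
      from xi_le[OF this] have "t * \<xi> \<le> t * (C * norm ((1/t) *\<^sub>R y + x0) - (1/t)*a1)"
        using 2 by (simp add: mult_left_mono)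
      also have "\<dots> = C * (t * norm ((1/t) *\<^sub>R y + x0)) - a1" using 2 by (simp add: algebra_simps)
      also have "t * norm ((1/t) *\<^sub>R y + x0) = norm (t *\<^sub>R ((1/t) *\<^sub>R y + x0))" using 2 by simp
      also have "t *\<^sub>R ((1/t) *\<^sub>R y + x0) = y + t *\<^sub>R x0" using 2 by (simp add: algebra_simps)
      finally show ?thesis using 1 by simp
    next
      case 3
      define s where "s = -t"
      have s: "s > 0" using 3 s_def by simp
      have "((1/s) *\<^sub>R y, (1/s)*a1) \<in> G" using sc 1 by blast
      from xi_ge[OF this] have "s * ((1/s)*a1 - C * norm ((1/s) *\<^sub>R y - x0)) \<le> s * \<xi>"
        using s by (simp add: mult_left_mono)
      then have "a1 - C * (s * norm ((1/s) *\<^sub>R y - x0)) \<le> s * \<xi>" using s by (simp add: algebra_simps)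
      also have "s * norm ((1/s) *\<^sub>R y - x0) = norm (s *\<^sub>R ((1/s) *\<^sub>R y - x0))" using s by simp
      also have "s *\<^sub>R ((1/s) *\<^sub>R y - x0) = y + t *\<^sub>R x0" using s s_def by (simp add: algebra_simps)
      finally show ?thesis using 1 s_def by simp
    qed
  qed
  moreover have "G \<subseteq> G'" unfolding G'_def by force
  moreover have "G' \<noteq> G"
  proof -
    have "(0::'a, 0::real) \<in> G" using sc[OF vb, of 0] by simp
    then have "(x0, \<xi>) \<in> G'" unfolding G'_def by force
    then show ?thesis using x0 by force
  qed
  ultimately show ?thesis by blast
qed

lemma hb_zorn:
  fixes G0 :: "('a::real_normed_vector \<times> real) set"
  assumes C: "C \<ge> 0" and good: "hbgood C G0" and ne: "G0 \<noteq> {}"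
  shows "\<exists>f. bounded_linear f \<and> (\<forall>x a. (x,a)\<in>G0 \<longrightarrow> f x = a) \<and> (\<forall>x. \<bar>f x\<bar> \<le> C * norm x)"
proof -
  define A where "A = {G. hbgood C G \<and> G0 \<subseteq> G}"
  have "\<exists>U\<in>A. \<forall>X\<in>Ch. X \<subseteq> U" if ch: "Ch \<in> chains A" for Ch
  proof (cases "Ch = {}")
    case True then show ?thesis using good unfolding A_def by auto
  next
    case False
    have sub: "Ch \<subseteq> A" using chainsD2[OF ch] .
    have cmp: "X \<subseteq> Y \<or> Y \<subseteq> X" if "X \<in> Ch" "Y \<in> Ch" for X Y using chainsD[OF ch that] .
    have gd: "hbgood C X" if "X \<in> Ch" for X using sub that unfolding A_def by auto
    have "hbgood C (\<Union>Ch)" unfolding hbgood_def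
    proof (intro conjI allI impI)
      fix x a b assume "(x,a)\<in>\<Union>Ch" "(x,b)\<in>\<Union>Ch"
      then obtain X Y where XY: "X\<in>Ch" "Y\<in>Ch" "(x,a)\<in>X" "(x,b)\<in>Y" by auto
      from cmp[OF XY(1,2)] show "a = b"
      proof
        assume "X \<subseteq> Y" then show ?thesis using hbgoodD(1)[OF gd[OF XY(2)]] XY by blast
      next
        assume "Y \<subseteq> X" then show ?thesis using hbgoodD(1)[OF gd[OF XY(1)]] XY by blast
      qed
    next
      fix x a y b assume "(x,a)\<in>\<Union>Ch" "(y,b)\<in>\<Union>Ch"
      then obtain X Y where XY: "X\<in>Ch" "Y\<in>Ch" "(x,a)\<in>X" "(y,b)\<in>Y" by auto
      from cmp[OF XY(1,2)] show "(x+y,a+b)\<in>\<Union>Ch"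
      proof
        assume "X \<subseteq> Y" then show ?thesis using hbgoodD(2)[OF gd[OF XY(2)]] XY by blast
      next
        assume "Y \<subseteq> X" then show ?thesis using hbgoodD(2)[OF gd[OF XY(1)]] XY by blast
      qed
    next
      fix x a c assume "(x,a)\<in>\<Union>Ch"
      then obtain X where "X\<in>Ch" "(x,a)\<in>X" by auto
      then show "(c *\<^sub>R x, c*a)\<in>\<Union>Ch" using hbgoodD(3)[OF gd] by blast
    next
      fix x a assume "(x,a)\<in>\<Union>Ch"
      then obtain X where "X\<in>Ch" "(x,a)\<in>X" by auto
      then show "a \<le> C * norm x" using hbgoodD(4)[OF gd] by blast
    qed
    moreover have "G0 \<subseteq> \<Union>Ch" using False sub unfolding A_def by auto
    ultimately show ?thesis unfolding A_def by auto
  qed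
  then obtain M where M: "M \<in> A" and max: "\<forall>X\<in>A. M \<subseteq> X \<longrightarrow> X = M"
    using Zorn_Lemma2[of A] by blast
  have gM: "hbgood C M" and G0M: "G0 \<subseteq> M" using M unfolding A_def by auto
  have Mne: "M \<noteq> {}" using G0M ne by auto
  have dom: "x \<in> fst ` M" for x
  proof (rule ccontr)
    assume "x \<notin> fst ` M"
    from hb_step[OF C gM Mne this] obtain G' where "hbgood C G'" "M \<subseteq> G'" "G' \<noteq> M" by blast
    then show False using max G0M unfolding A_def by blast
  qed
  have sv: "\<And>x a b. (x,a)\<in>M \<Longrightarrow> (x,b)\<in>M \<Longrightarrow> a = b"
    and ad: "\<And>x a y b. (x,a)\<in>M \<Longrightarrow> (y,b)\<in>M \<Longrightarrow> (x+y, a+b) \<in> M"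
    and sc: "\<And>x a c. (x,a)\<in>M \<Longrightarrow> (c *\<^sub>R x, c*a) \<in> M"
    and bd: "\<And>x a. (x,a)\<in>M \<Longrightarrow> a \<le> C * norm x"
    using hbgoodD[OF gM] by blast+
  define f where "f x = (THE a. (x,a)\<in>M)" for x
  have fM: "(x, f x) \<in> M" for x
  proof -
    obtain a where "(x,a)\<in>M" using dom[of x] by force
    then have "(THE a. (x,a)\<in>M) = a" using sv by blast
    then show ?thesis using \<open>(x,a)\<in>M\<close> f_def by simp
  qed
  have feq: "f x = a" if "(x,a)\<in>M" for x a using sv[OF fM that] .
  have fadd: "f (x+y) = f x + f y" for x y using feq[OF ad[OF fM fM]] .
  have fsc: "f (c *\<^sub>R x) = c * f x" for c x using feq[OF sc[OF fM]] .
  have fb: "\<bar>f x\<bar> \<le> C * norm x" for x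
  proof -
    have "f x \<le> C * norm x" using bd[OF fM] .
    moreover have "- f x \<le> C * norm x" using bd[OF sc[OF fM[of x], of "-1"]] by simp
    ultimately show ?thesis by linarith
  qed
  have "bounded_linear f"
    by (rule bounded_linear_intro[where K=C]) (use fadd fsc fb in \<open>auto simp: mult.commute\<close>)
  moreover have "\<forall>x a. (x,a)\<in>G0 \<longrightarrow> f x = a" using feq G0M by blast
  ultimately show ?thesis using fb by blast
qed



lemma hb_sep:
  fixes W :: "'a::real_normed_vector set"
  assumes W: "subspace W" and g: "g \<notin> closure W"
  shows "\<exists>f. bounded_linear f \<and> (\<forall>w\<in>W. f w = 0) \<and> f g = infdist g W \<and> (\<forall>x. \<bar>f x\<bar> \<le> norm x)"
proof -
  define d where "d = infdist g W"
  have Wne: "W \<noteq> {}" using subspace_0[OF W] by auto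
  have dpos: "d > 0" using in_closure_iff_infdist_zero[OF Wne, of g] g infdist_nonneg[of g W]
    unfolding d_def by linarith
  define G0 where "G0 = {(w + t *\<^sub>R g, t * d) | w t. w \<in> W}"
  have "hbgood 1 G0" unfolding hbgood_def
  proof (intro conjI allI impI)
    fix x a b assume xa: "(x,a)\<in>G0" and xb: "(x,b)\<in>G0"
    from xa obtain w1 t1 where 1: "w1\<in>W" "x = w1 + t1 *\<^sub>R g" "a = t1 * d" unfolding G0_def by auto
    from xb obtain w2 t2 where 2: "w2\<in>W" "x = w2 + t2 *\<^sub>R g" "b = t2 * d" unfolding G0_def by auto
    have "t1 = t2"
    proof (rule ccontr)
      assume ne: "t1 \<noteq> t2"
      have "w1 - w2 = (t2 - t1) *\<^sub>R g" using 1(2) 2(2) by (simp add: algebra_simps)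
      then have "g = (1/(t2-t1)) *\<^sub>R (w1 - w2)" using ne by simp
      also have "\<dots> \<in> W" using W 1(1) 2(1) by (simp add: subspace_diff subspace_scale)
      finally show False using g closure_subset by blast
    qed
    then show "a = b" using 1 2 by simp
  next
    fix x a y b assume xa: "(x,a)\<in>G0" and yb: "(y,b)\<in>G0"
    from xa obtain w1 t1 where 1: "w1\<in>W" "x = w1 + t1 *\<^sub>R g" "a = t1 * d" unfolding G0_def by auto
    from yb obtain w2 t2 where 2: "w2\<in>W" "y = w2 + t2 *\<^sub>R g" "b = t2 * d" unfolding G0_def by auto
    have "w1 + w2 \<in> W" using W 1 2 by (simp add: subspace_add)
    moreover have "x + y = (w1+w2) + (t1+t2) *\<^sub>R g" "a + b = (t1+t2)*d" using 1 2 by (auto simp: algebra_simps)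
    ultimately show "(x+y,a+b)\<in>G0" unfolding G0_def by blast
  next
    fix x a c assume xa: "(x,a)\<in>G0"
    from xa obtain w1 t1 where 1: "w1\<in>W" "x = w1 + t1 *\<^sub>R g" "a = t1 * d" unfolding G0_def by auto
    have "c *\<^sub>R w1 \<in> W" using W 1 by (simp add: subspace_scale)
    moreover have "c *\<^sub>R x = c *\<^sub>R w1 + (c*t1) *\<^sub>R g" "c * a = (c*t1)*d" using 1 by (auto simp: algebra_simps)
    ultimately show "(c *\<^sub>R x, c*a)\<in>G0" unfolding G0_def by blast
  next
    fix x a assume xa: "(x,a)\<in>G0"
    from xa obtain w t where 1: "w\<in>W" "x = w + t *\<^sub>R g" "a = t * d" unfolding G0_def by auto
    show "a \<le> 1 * norm x"
    proof (cases "t > 0")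
      case False
      then have "t * d \<le> 0" using dpos by (simp add: mult_nonpos_nonneg)
      then show ?thesis using 1 norm_ge_zero[of x] by linarith
    next
      case True
      have "- ((1/t) *\<^sub>R w) \<in> W" using W 1 by (simp add: subspace_scale subspace_neg)
      then have "d \<le> dist g (- ((1/t) *\<^sub>R w))" unfolding d_def by (rule infdist_le)
      also have "\<dots> = norm (g + (1/t) *\<^sub>R w)" by (simp add: dist_norm)
      finally have "t * d \<le> t * norm (g + (1/t) *\<^sub>R w)" using True by simp
      also have "\<dots> = norm (t *\<^sub>R (g + (1/t) *\<^sub>R w))" using True by simp
      also have "t *\<^sub>R (g + (1/t) *\<^sub>R w) = x" using True 1 by (simp add: algebra_simps)
      finally show ?thesis using 1 by simp
    qed
  qed
  moreover have "G0 \<noteq> {}" using Wne unfolding G0_def by auto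
  ultimately obtain f where f: "bounded_linear f" "\<forall>x a. (x,a)\<in>G0 \<longrightarrow> f x = a" "\<forall>x. \<bar>f x\<bar> \<le> 1 * norm x"
    using hb_zorn[of 1 G0] by auto
  have "f w = 0" if "w \<in> W" for w
  proof -
    have "(w + 0 *\<^sub>R g, 0 * d) \<in> G0" using that unfolding G0_def by blast
    then show ?thesis using f(2) by simp
  qed
  moreover have "f g = d"
  proof -
    have "(0 + 1 *\<^sub>R g, 1 * d) \<in> G0" using subspace_0[OF W] unfolding G0_def by blast
    then show ?thesis using f(2) by simp
  qed
  ultimately show ?thesis using f unfolding d_def by auto
qed

lemma hb_norming:
  fixes e :: "'a::real_normed_vector"
  shows "\<exists>f. bounded_linear f \<and> f e = norm e \<and> (\<forall>x. \<bar>f x\<bar> \<le> norm x)"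
proof (cases "e = 0")
  case True then show ?thesis by (intro exI[of _ "\<lambda>x. 0"]) simp
next
  case False
  have "e \<notin> closure {0}" using False by simp
  from hb_sep[OF subspace_single_0 this] show ?thesis by (auto simp: dist_norm)
qed



lemma fd_seqcompact:
  fixes B :: "'a::real_normed_vector set" and u :: "nat \<Rightarrow> 'a"
  assumes "finite B"
  shows "(\<forall>n. u n \<in> span B) \<Longrightarrow> bounded (range u) \<Longrightarrow> \<exists>l r. strict_mono r \<and> l \<in> span B \<and> (u \<circ> r) \<longlonglongrightarrow> l"
  using assms
proof (induction B arbitrary: u rule: finite_induct)
  case empty
  then have "u n = 0" for n by simp
  then have "strict_mono (id::nat\<Rightarrow>nat) \<and> (0::'a) \<in> span {} \<and> (u \<circ> id) \<longlonglongrightarrow> 0"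
    by (simp add: strict_mono_def o_def)
  then show ?case by blast
next
  case (insert b B)
  have clo: "closed (span B)"
    unfolding closed_sequential_limits
  proof (intro allI impI, elim conjE)
    fix x l assume xs: "\<forall>n. x n \<in> span B" and xl: "x \<longlonglongrightarrow> l"
    from insert.IH[OF xs convergent_imp_bounded[OF xl]] obtain l' r
      where "strict_mono r" "l' \<in> span B" "(x \<circ> r) \<longlonglongrightarrow> l'" by blast
    moreover have "(x \<circ> r) \<longlonglongrightarrow> l" using LIMSEQ_subseq_LIMSEQ[OF xl \<open>strict_mono r\<close>] .
    ultimately show "l \<in> span B" using LIMSEQ_unique by metis
  qed
  show ?case
  proof (cases "b \<in> span B")
    case True
    have "span (insert b B) \<subseteq> span B"
      using True by (metis insert_subset span_minimal span_superset subspace_span)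
    then have "\<forall>n. u n \<in> span B" using insert.prems(1) by blast
    from insert.IH[OF this insert.prems(2)] show ?thesis
      using span_mono[of B "insert b B"] by blast
  next
    case False
    then have "b \<notin> closure (span B)" using clo by simp
    from hb_sep[OF subspace_span this] obtain f where
      f: "bounded_linear f" "\<forall>w\<in>span B. f w = 0" "f b = infdist b (span B)" "\<forall>x. \<bar>f x\<bar> \<le> norm x"
      by blast
    define d where "d = infdist b (span B)"
    have "span B \<noteq> {}" using span_zero[of B] by blast
    then have "infdist b (span B) \<noteq> 0"
      using in_closure_iff_infdist_zero[of "span B" b] \<open>b \<notin> closure (span B)\<close> by blast
    then have dpos: "d > 0" using infdist_nonneg[of b "span B"] unfolding d_def by linarith
    interpret f: bounded_linear f by fact
    define t where "t n = f (u n) / d" for n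
    define e where "e n = u n - t n *\<^sub>R b" for n
    have es: "e n \<in> span B" for n
    proof -
      obtain k where k: "u n - k *\<^sub>R b \<in> span B" using insert.prems(1) span_breakdown_eq by blast
      have "f (u n) = f ((u n - k *\<^sub>R b) + k *\<^sub>R b)" by simp
      also have "\<dots> = f (u n - k *\<^sub>R b) + k * f b" by (simp only: f.add f.scale) simp
      also have "\<dots> = k * d" using f(2) k f(3) d_def by simp
      finally have "t n = k" unfolding t_def using dpos by simp
      then show ?thesis using k e_def by simp
    qed
    obtain M where M: "\<forall>n. norm (u n) \<le> M" using insert.prems(2) unfolding bounded_iff by auto
    have tb: "\<bar>t n\<bar> \<le> M / d" for n
    proof -
      have "\<bar>f (u n)\<bar> \<le> M" using f(4) M order_trans by blast
      then show ?thesis unfolding t_def using dpos by (simp add: abs_div divide_right_mono)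
    qed
    have "bounded (range t)" unfolding bounded_iff using tb by (intro exI[of _ "M/d"]) auto
    from bounded_imp_convergent_subsequence[OF this] obtain tl r1
      where r1: "strict_mono r1" "(t \<circ> r1) \<longlonglongrightarrow> tl" by blast
    have "norm (e n) \<le> M + M / d * norm b" for n
    proof -
      have "norm (e n) \<le> norm (u n) + \<bar>t n\<bar> * norm b" unfolding e_def
        using norm_triangle_ineq4[of "u n" "t n *\<^sub>R b"] by simp
      also have "\<dots> \<le> M + M / d * norm b" using M tb by (intro add_mono mult_right_mono) auto
      finally show ?thesis .
    qed
    then have "bounded (range (e \<circ> r1))" unfolding bounded_iff by (intro exI[of _ "M + M / d * norm b"]) auto
    moreover have "\<forall>n. (e \<circ> r1) n \<in> span B" using es by simp
    ultimately obtain el r2 where r2: "strict_mono r2" "el \<in> span B" "((e \<circ> r1) \<circ> r2) \<longlonglongrightarrow> el"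
      using insert.IH[of "e \<circ> r1"] by blast
    have tl2: "(t \<circ> r1 \<circ> r2) \<longlonglongrightarrow> tl" using LIMSEQ_subseq_LIMSEQ[OF r1(2) r2(1)] .
    have "(\<lambda>n. e (r1 (r2 n)) + t (r1 (r2 n)) *\<^sub>R b) \<longlonglongrightarrow> el + tl *\<^sub>R b"
      using r2(3) tl2 by (intro tendsto_intros) (auto simp: o_def)
    moreover have "e n + t n *\<^sub>R b = u n" for n unfolding e_def by simp
    ultimately have "(u \<circ> (r1 \<circ> r2)) \<longlonglongrightarrow> el + tl *\<^sub>R b" by (simp add: o_def)
    moreover have "strict_mono (r1 \<circ> r2)" using r1(1) r2(1) by (rule strict_mono_o)
    moreover have "el + tl *\<^sub>R b \<in> span (insert b B)"
    proof -
      have "el \<in> span (insert b B)" using r2(2) span_mono[of B "insert b B"] by blast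
      moreover have "tl *\<^sub>R b \<in> span (insert b B)" by (intro span_scale span_base) simp
      ultimately show ?thesis by (rule span_add)
    qed
    ultimately show ?thesis by blast
  qed
qed

lemma fd_sphere_compact:
  fixes B :: "'a::real_normed_vector set"
  assumes "finite B"
  shows "compact (span B \<inter> sphere 0 1)"
  unfolding compact_eq_seq_compact_metric seq_compact_def
proof (intro allI impI)
  fix u :: "nat \<Rightarrow> 'a" assume u: "\<forall>n. u n \<in> span B \<inter> sphere 0 1"
  then have "bounded (range u)" unfolding bounded_iff by (intro exI[of _ 1]) auto
  moreover have "\<forall>n. u n \<in> span B" using u by blast
  ultimately obtain l r where lr: "strict_mono r" "l \<in> span B" "(u \<circ> r) \<longlonglongrightarrow> l"
    using fd_seqcompact[OF assms, of u] by blast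
  have "(\<lambda>n. norm ((u \<circ> r) n)) \<longlonglongrightarrow> norm l" using lr(3) by (rule tendsto_norm)
  moreover have "(\<lambda>n. norm ((u \<circ> r) n)) = (\<lambda>n. 1)" using u by auto
  ultimately have "(\<lambda>n. 1::real) \<longlonglongrightarrow> norm l" by simp
  then have "norm l = 1" using LIMSEQ_unique[OF _ tendsto_const] by metis
  then show "\<exists>l\<in>span B \<inter> sphere 0 1. \<exists>r. strict_mono r \<and> (u \<circ> r) \<longlonglongrightarrow> l" using lr by auto
qed


definition wnull :: "(nat \<Rightarrow> 'a::real_normed_vector) \<Rightarrow> bool" where
  "wnull z \<longleftrightarrow> (\<forall>f::'a \<Rightarrow> real. bounded_linear f \<longrightarrow> (\<lambda>n. f (z n)) \<longlonglongrightarrow> 0)"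

lemma mazur_step:
  fixes B :: "'a::real_normed_vector set" and z :: "nat \<Rightarrow> 'a"
  assumes B: "finite B" and z1: "\<forall>n. norm (z n) = 1" and wn: "wnull z" and eta: "0 < \<eta>" "\<eta> \<le> 1"
  shows "\<exists>N. \<forall>n\<ge>N. \<forall>e\<in>span B. \<forall>t. (1-\<eta>) * norm e \<le> norm (e + t *\<^sub>R z n)"
proof -
  define K where "K = span B \<inter> sphere 0 1"
  have cK: "compact K" unfolding K_def using fd_sphere_compact[OF B] .
  define fc where "fc c = (SOME f. bounded_linear f \<and> f c = norm c \<and> (\<forall>x. \<bar>f x\<bar> \<le> norm x))" for c :: 'a
  have fc: "bounded_linear (fc c) \<and> fc c c = norm c \<and> (\<forall>x. \<bar>fc c x\<bar> \<le> norm x)" for c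
    unfolding fc_def using someI_ex[OF hb_norming[of c]] .
  have cov: "K \<subseteq> (\<Union>c\<in>K. ball c (\<eta>/2))"
  proof
    fix x assume "x \<in> K"
    moreover have "x \<in> ball x (\<eta>/2)" using eta by simp
    ultimately show "x \<in> (\<Union>c\<in>K. ball c (\<eta>/2))" by blast
  qed
  have opn: "\<And>T. T \<in> K \<Longrightarrow> open (ball T (\<eta>/2))" by simp
  obtain C' where C': "C' \<subseteq> K" "finite C'" "K \<subseteq> (\<Union>c\<in>C'. ball c (\<eta>/2))"
    by (rule compactE_image[OF cK opn cov])
  have "\<forall>c\<in>C'. eventually (\<lambda>n. \<bar>fc c (z n)\<bar> < \<eta>/4) sequentially"
  proof
    fix c assume "c \<in> C'"
    have "bounded_linear (fc c)" using fc by blast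
    then have "(\<lambda>n. fc c (z n)) \<longlonglongrightarrow> 0" using wn unfolding wnull_def by blast
    then have "(\<lambda>n. \<bar>fc c (z n)\<bar>) \<longlonglongrightarrow> 0" by (rule tendsto_rabs_zero)
    then show "eventually (\<lambda>n. \<bar>fc c (z n)\<bar> < \<eta>/4) sequentially"
      using eta by (intro order_tendstoD(2)) auto
  qed
  then have "eventually (\<lambda>n. \<forall>c\<in>C'. \<bar>fc c (z n)\<bar> < \<eta>/4) sequentially"
    by (rule eventually_ball_finite[OF C'(2)])
  then obtain N where N: "\<And>n. n \<ge> N \<Longrightarrow> \<forall>c\<in>C'. \<bar>fc c (z n)\<bar> < \<eta>/4"
    unfolding eventually_sequentially by blast
  have core: "1 - \<eta> \<le> norm (e' + s *\<^sub>R z n)" if n: "n \<ge> N" and e': "e' \<in> K" for n e' s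
  proof (cases "\<bar>s\<bar> \<ge> 2")
    case True
    have "norm (s *\<^sub>R z n) = norm ((e' + s *\<^sub>R z n) - e')" by simp
    also have "\<dots> \<le> norm (e' + s *\<^sub>R z n) + norm e'" by (rule norm_triangle_ineq4)
    finally have "norm (s *\<^sub>R z n) - norm e' \<le> norm (e' + s *\<^sub>R z n)" by simp
    then show ?thesis using True z1 e' eta unfolding K_def by simp
  next
    case False
    from e' C'(3) obtain c where c: "c \<in> C'" "dist c e' < \<eta>/2" by auto
    have nc: "norm c = 1" using c C'(1) unfolding K_def by auto
    interpret f: bounded_linear "fc c" using fc by blast
    have "fc c (e' + s *\<^sub>R z n) = fc c c + fc c (e' - c) + s * fc c (z n)"
      by (simp add: f.add f.diff f.scale)
    moreover have "fc c c = 1" using fc nc by simp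
    moreover have "\<bar>fc c (e' - c)\<bar> \<le> norm (e' - c)" using fc by blast
    moreover have "norm (e' - c) < \<eta>/2" using c(2) by (simp add: dist_norm norm_minus_commute)
    moreover have "\<bar>s * fc c (z n)\<bar> \<le> 2 * (\<eta>/4)"
    proof -
      have "\<bar>fc c (z n)\<bar> \<le> \<eta>/4" using N[OF n] c(1) by fastforce
      then show ?thesis unfolding abs_mult using False by (intro mult_mono) auto
    qed
    moreover have "fc c (e' + s *\<^sub>R z n) \<le> norm (e' + s *\<^sub>R z n)" using fc abs_le_D1 by blast
    ultimately show ?thesis by linarith
  qed
  have "(1-\<eta>) * norm e \<le> norm (e + t *\<^sub>R z n)" if n: "n \<ge> N" and e: "e \<in> span B" for n e t
  proof (cases "e = 0")
    case True then show ?thesis by simp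
  next
    case False
    define e' where "e' = (1 / norm e) *\<^sub>R e"
    have "e' \<in> K" unfolding K_def e'_def using e False by (simp add: span_scale)
    from core[OF n this, of "t / norm e"]
    have "(1-\<eta>) * norm e \<le> norm e * norm (e' + (t / norm e) *\<^sub>R z n)"
      using False by (metis mult.commute mult_left_mono norm_ge_zero)
    also have "\<dots> = norm (norm e *\<^sub>R (e' + (t / norm e) *\<^sub>R z n))" by simp
    also have "norm e *\<^sub>R (e' + (t / norm e) *\<^sub>R z n) = e + t *\<^sub>R z n"
      using False unfolding e'_def by (simp add: algebra_simps)
    finally show ?thesis .
  qed
  then show ?thesis by blast
qed



lemma subspace_closure_rn:
  fixes S :: "'a::real_normed_vector set"
  assumes S: "subspace S"
  shows "subspace (closure S)"
proof (rule subspaceI)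
  show "0 \<in> closure S" using subspace_0[OF S] closure_subset by blast
next
  fix x y assume "x \<in> closure S" "y \<in> closure S"
  then obtain a b where a: "\<forall>n. a n \<in> S" "a \<longlonglongrightarrow> x" and b: "\<forall>n. b n \<in> S" "b \<longlonglongrightarrow> y"
    unfolding closure_sequential by blast
  have "\<forall>n. a n + b n \<in> S" using a b S by (simp add: subspace_add)
  moreover have "(\<lambda>n. a n + b n) \<longlonglongrightarrow> x + y" using a b by (intro tendsto_intros)
  ultimately show "x + y \<in> closure S" unfolding closure_sequential by (intro exI[of _ "\<lambda>n. a n + b n"]) simp
next
  fix c x assume "x \<in> closure S"
  then obtain a where a: "\<forall>n. a n \<in> S" "a \<longlonglongrightarrow> x"
    unfolding closure_sequential by blast
  have "\<forall>n. c *\<^sub>R a n \<in> S" using a S by (simp add: subspace_scale)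
  moreover have "(\<lambda>n. c *\<^sub>R a n) \<longlonglongrightarrow> c *\<^sub>R x" using a by (intro tendsto_intros)
  ultimately show "c *\<^sub>R x \<in> closure S" unfolding closure_sequential by (intro exI[of _ "\<lambda>n. c *\<^sub>R a n"]) simp
qed

lemma infdist_closure_eq: "infdist x (closure A) = infdist x A"
  by (simp add: infdist_eq_setdist)

lemma infdist_geI:
  assumes "A \<noteq> {}" "\<And>a. a \<in> A \<Longrightarrow> c \<le> dist x a"
  shows "c \<le> infdist x A"
  unfolding infdist_notempty[OF assms(1)] by (rule cINF_greatest[OF assms])

lemma fc_dist:
  fixes F :: "'a::real_normed_vector set" and u :: "nat \<Rightarrow> 'a"
  assumes "finite F"
  shows "subspace V \<Longrightarrow> span (V \<union> F) = UNIV \<Longrightarrow> wnull u \<Longrightarrow> (\<lambda>i. infdist (u i) V) \<longlonglongrightarrow> 0"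
  using assms
proof (induction F arbitrary: V rule: finite_induct)
  case empty
  then have "V = UNIV" using span_eq_iff[of V] by simp
  then show ?case by simp
next
  case (insert g F)
  show ?case
  proof (cases "g \<in> closure V")
    case True
    have sV': "subspace (closure V)" using subspace_closure_rn[OF insert.prems(1)] .
    have "V \<union> insert g F \<subseteq> span (closure V \<union> F)"
      using True closure_subset[of V] span_superset[of "closure V \<union> F"] by blast
    then have "span (V \<union> insert g F) \<subseteq> span (closure V \<union> F)"
      by (rule span_minimal) simp
    then have "span (closure V \<union> F) = UNIV" using insert.prems(2) by blast
    from insert.IH[OF sV' this insert.prems(3)] show ?thesis by (simp add: infdist_closure_eq)
  next
    case False
    from hb_sep[OF insert.prems(1) False] obtain f where
      f: "bounded_linear f" "\<forall>w\<in>V. f w = 0" "f g = infdist g V" "\<forall>x. \<bar>f x\<bar> \<le> norm x" by blast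
    interpret f: bounded_linear f by fact
    define d where "d = infdist g V"
    have Vne: "V \<noteq> {}" using subspace_0[OF insert.prems(1)] by blast
    have "infdist g V \<noteq> 0" using in_closure_iff_infdist_zero[OF Vne, of g] False by blast
    then have dpos: "d > 0" using infdist_nonneg[of g V] unfolding d_def by linarith
    define V' where "V' = span (insert g V)"
    have sV': "subspace V'" unfolding V'_def by simp
    have "V \<union> insert g F \<subseteq> span (V' \<union> F)"
      using span_superset[of "insert g V"] span_superset[of "V' \<union> F"] unfolding V'_def by blast
    then have "span (V \<union> insert g F) \<subseteq> span (V' \<union> F)"
      by (rule span_minimal) simp
    then have "span (V' \<union> F) = UNIV" using insert.prems(2) by blast
    from insert.IH[OF sV' this insert.prems(3)] have a0: "(\<lambda>i. infdist (u i) V') \<longlonglongrightarrow> 0" .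
    have fu0: "(\<lambda>i. f (u i)) \<longlonglongrightarrow> 0" using insert.prems(3) f(1) unfolding wnull_def by blast
    define K where "K = norm g / d"
    have K0: "K \<ge> 0" unfolding K_def using dpos by simp
    have ineq: "infdist x V \<le> (1 + K) * infdist x V' + K * \<bar>f x\<bar>" for x
    proof -
      have "(infdist x V - K * \<bar>f x\<bar>) / (1 + K) \<le> infdist x V'"
      proof (rule infdist_geI)
        show "V' \<noteq> {}" unfolding V'_def using span_zero by blast
      next
        fix w assume w: "w \<in> V'"
        have spV: "span V = V" using insert.prems(1) by simp
        obtain k where k: "w - k *\<^sub>R g \<in> V"
          using w unfolding V'_def span_breakdown_eq spV by blast
        have "f w = f (w - k *\<^sub>R g) + k * f g" by (simp add: f.diff f.scale)
        then have fw: "f w = k * d" using f(2) k f(3) d_def by simp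
        have "infdist x V \<le> dist x (w - k *\<^sub>R g)" using k by (rule infdist_le)
        also have "\<dots> = norm ((x - w) + k *\<^sub>R g)" by (simp add: dist_norm algebra_simps)
        also have "\<dots> \<le> norm (x - w) + \<bar>k\<bar> * norm g" using norm_triangle_ineq[of "x - w" "k *\<^sub>R g"] by simp
        also have "\<bar>k\<bar> = \<bar>f w\<bar> / d" using fw dpos by (simp add: abs_mult)
        also have "\<bar>f w\<bar> \<le> \<bar>f x\<bar> + norm (x - w)"
        proof -
          have "f w = f x - f (x - w)" by (simp add: f.diff)
          then show ?thesis using f(4)[rule_format, of "x - w"] by linarith
        qed
        then have "\<bar>f w\<bar> / d * norm g \<le> (\<bar>f x\<bar> + norm (x - w)) / d * norm g"
          using dpos by (intro mult_right_mono divide_right_mono) auto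
        finally have "infdist x V \<le> norm (x - w) + (\<bar>f x\<bar> + norm (x - w)) * K"
          unfolding K_def by (simp add: field_simps)
        then have "infdist x V - K * \<bar>f x\<bar> \<le> (1 + K) * dist x w"
          by (simp add: dist_norm algebra_simps)
        then show "(infdist x V - K * \<bar>f x\<bar>) / (1 + K) \<le> dist x w"
          using K0 by (simp add: divide_le_eq mult.commute)
      qed
      then show ?thesis using K0 by (simp add: divide_le_eq algebra_simps)
    qed
    have "(\<lambda>i. (1 + K) * infdist (u i) V' + K * \<bar>f (u i)\<bar>) \<longlonglongrightarrow> (1 + K) * 0 + K * \<bar>0\<bar>"
      using a0 fu0 by (intro tendsto_intros)
    then have lim: "(\<lambda>i. (1 + K) * infdist (u i) V' + K * \<bar>f (u i)\<bar>) \<longlonglongrightarrow> 0" by simp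
    show ?thesis
    proof (rule Lim_null_comparison[OF _ lim], rule always_eventually, rule allI)
      fix i
      show "norm (infdist (u i) V) \<le> (1 + K) * infdist (u i) V' + K * \<bar>f (u i)\<bar>"
        using ineq[of "u i"] infdist_nonneg[of "u i" V] by simp
    qed
  qed
qed



lemma closure_span_insert:
  fixes W :: "'a::real_normed_vector set"
  assumes W: "subspace W" and y: "y \<in> closure (span (insert l W))"
  shows "\<exists>t. y - t *\<^sub>R l \<in> closure W"
proof (cases "l \<in> closure W")
  case True
  have "insert l W \<subseteq> closure W" using True closure_subset by blast
  then have "span (insert l W) \<subseteq> closure W"
    using span_minimal subspace_closure_rn[OF W] by blast
  then have "closure (span (insert l W)) \<subseteq> closure W"
    using closure_minimal closed_closure by blast
  then show ?thesis using y by (intro exI[of _ 0]) auto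
next
  case False
  from hb_sep[OF W False] obtain f where
    f: "bounded_linear f" "\<forall>w\<in>W. f w = 0" "f l = infdist l W" "\<forall>x. \<bar>f x\<bar> \<le> norm x" by blast
  interpret f: bounded_linear f by fact
  define d where "d = infdist l W"
  have Wne: "W \<noteq> {}" using subspace_0[OF W] by blast
  have "infdist l W \<noteq> 0" using in_closure_iff_infdist_zero[OF Wne, of l] False by blast
  then have dpos: "d > 0" using infdist_nonneg[of l W] unfolding d_def by linarith
  from y obtain a where a: "\<forall>n. a n \<in> span (insert l W)" "a \<longlonglongrightarrow> y"
    unfolding closure_sequential by blast
  have spW: "span W = W" using W by simp
  have inW: "a n - (f (a n) / d) *\<^sub>R l \<in> W" for n
  proof -
    obtain k where k: "a n - k *\<^sub>R l \<in> W" using a(1) unfolding span_breakdown_eq spW by blast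
    have "f (a n) = f (a n - k *\<^sub>R l) + k * f l" by (simp add: f.diff f.scale)
    then have "f (a n) = k * d" using f(2) k f(3) d_def by simp
    then show ?thesis using k dpos by simp
  qed
  have "(\<lambda>n. a n - (f (a n) / d) *\<^sub>R l) \<longlonglongrightarrow> y - (f y / d) *\<^sub>R l"
    using a(2) dpos by (intro tendsto_intros f.tendsto) auto
  then have "y - (f y / d) *\<^sub>R l \<in> closure W"
    unfolding closure_sequential using inW by (intro exI[of _ "\<lambda>n. a n - (f (a n) / d) *\<^sub>R l"]) simp
  then show ?thesis by blast
qed

definition goodseq :: "(nat \<Rightarrow> 'a::real_normed_vector) \<Rightarrow> bool" where
  "goodseq w \<longleftrightarrow> (\<forall>k. \<forall>e\<in>span (w ` {..<k}). \<forall>t. (1 - (1/2)^(k+2)) * norm e \<le> norm (e + t *\<^sub>R w k))"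

lemma construct:
  fixes z :: "nat \<Rightarrow> 'a::real_normed_vector"
  assumes z1: "\<forall>n. norm (z n) = 1" and wn: "wnull z"
  shows "\<exists>\<phi>. strict_mono \<phi> \<and> goodseq (z \<circ> \<phi>)"
proof -
  define Q where "Q n x y \<longleftrightarrow> x < y \<and> (\<forall>e\<in>span (z ` {..x}). \<forall>t. (1 - (1/2::real)^(n+3)) * norm e \<le> norm (e + t *\<^sub>R z y))"
    for n x y
  have step: "\<exists>y. Q n x y" for n x
  proof -
    have "(0::real) < (1/2)^(n+3)" by simp
    moreover have "(1/2::real)^(n+3) \<le> 1" by (simp add: power_le_one)
    ultimately obtain N where N: "\<forall>m\<ge>N. \<forall>e\<in>span (z ` {..x}). \<forall>t. (1 - (1/2)^(n+3)) * norm e \<le> norm (e + t *\<^sub>R z m)"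
      using mazur_step[of "z ` {..x}" z "(1/2)^(n+3)"] z1 wn by auto
    show ?thesis unfolding Q_def
      by (rule exI[of _ "max N (Suc x)"]) (use N in auto)
  qed
  have "\<exists>f. \<forall>n. True \<and> Q n (f n) (f (Suc n))"
    by (rule dependent_nat_choice) (use step in auto)
  then obtain \<phi> where \<phi>: "\<And>n. Q n (\<phi> n) (\<phi> (Suc n))" by blast
  have sm: "strict_mono \<phi>" unfolding strict_mono_Suc_iff using \<phi> Q_def by blast
  have "goodseq (z \<circ> \<phi>)" unfolding goodseq_def
  proof (intro allI ballI)
    fix k e t assume e: "e \<in> span ((z \<circ> \<phi>) ` {..<k})"
    show "(1 - (1/2)^(k+2)) * norm e \<le> norm (e + t *\<^sub>R (z \<circ> \<phi>) k)"
    proof (cases k)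
      case 0 then show ?thesis using e by simp
    next
      case (Suc n)
      have "(z \<circ> \<phi>) ` {..<k} \<subseteq> z ` {..\<phi> n}"
      proof
        fix v assume "v \<in> (z \<circ> \<phi>) ` {..<k}"
        then obtain j where j: "j < Suc n" "v = z (\<phi> j)" using Suc by auto
        then have "\<phi> j \<le> \<phi> n" using sm by (simp add: strict_mono_less_eq)
        then show "v \<in> z ` {..\<phi> n}" using j by auto
      qed
      then have "e \<in> span (z ` {..\<phi> n})" using e span_mono by blast
      moreover have "k + 2 = n + 3" using Suc by simp
      ultimately show ?thesis using \<phi>[of n] Suc unfolding Q_def by (metis o_apply)
    qed
  qed
  then show ?thesis using sm by blast
qed

lemma lb_aux:
  assumes g: "goodseq w"
  shows "\<forall>e\<in>span (w ` {..<k}). \<forall>u\<in>span (w ` {k..<k+d}). (1/2 + (1/2)^(k+d+1)) * norm e \<le> norm (e + u)"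
proof (induction d)
  case 0
  show ?case
  proof (intro ballI)
    fix e u assume "u \<in> span (w ` {k..<k+0})"
    then have "u = 0" by simp
    moreover have "(1/2 + (1/2::real)^(k+0+1)) \<le> 1"
    proof -
      have "(1/2::real)^(k+0+1) \<le> (1/2)^1" by (intro power_decreasing) auto
      then show ?thesis by simp
    qed
    ultimately show "(1/2 + (1/2)^(k+0+1)) * norm e \<le> norm (e + u)"
      by (simp add: mult_left_le_one_le)
  qed
next
  case (Suc d)
  show ?case
  proof (intro ballI)
    fix e u assume e: "e \<in> span (w ` {..<k})" and u: "u \<in> span (w ` {k..<k + Suc d})"
    define m where "m = k + d"
    have "{k..<k + Suc d} = insert m {k..<k+d}" unfolding m_def by auto
    then have "w ` {k..<k + Suc d} = insert (w m) (w ` {k..<k+d})" by simp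
    then obtain t where t: "u - t *\<^sub>R w m \<in> span (w ` {k..<k+d})"
      using u span_breakdown_eq by metis
    define u' where "u' = u - t *\<^sub>R w m"
    have ih: "(1/2 + (1/2)^(k+d+1)) * norm e \<le> norm (e + u')"
      using Suc.IH e t u'_def by blast
    have "w ` {..<k} \<union> w ` {k..<k+d} \<subseteq> w ` {..<m}" unfolding m_def by auto
    then have "e + u' \<in> span (w ` {..<m})"
      using e t u'_def span_mono[of "w ` {..<k}" "w ` {..<m}"] span_mono[of "w ` {k..<k+d}" "w ` {..<m}"]
      by (simp add: span_add subsetD)
    then have gm: "(1 - (1/2)^(m+2)) * norm (e + u') \<le> norm (e + u' + t *\<^sub>R w m)"
      using g unfolding goodseq_def by blast
    have eu: "e + u' + t *\<^sub>R w m = e + u" unfolding u'_def by simp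
    define a where "a = (1/2::real)^(m+2)"
    have a0: "0 \<le> a" unfolding a_def by simp
    have a1: "a \<le> 1/4"
    proof -
      have "(1/2::real)^m \<le> 1" by (rule power_le_one) auto
      then show ?thesis unfolding a_def by (simp add: power_add)
    qed
    have h1: "(1/2::real)^(k+d+1) = 2 * a" unfolding a_def m_def by simp
    have h2: "(1/2::real)^(k + Suc d + 1) = a" unfolding a_def m_def by simp
    have poly: "1/2 + a \<le> (1 - a) * (1/2 + 2 * a)"
    proof -
      have p1: "0 \<le> a * (1/2 - 2 * a)" using a0 a1 by simp
      have p2: "(1 - a) * (1/2 + 2 * a) = 1/2 + a + a * (1/2 - 2 * a)" by (simp add: field_simps)
      show ?thesis unfolding p2 using p1 by simp
    qed
    have "(1/2 + a) * norm e \<le> (1 - a) * ((1/2 + 2 * a) * norm e)"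
      using mult_right_mono[OF poly norm_ge_zero[of e]] by (simp add: mult.assoc)
    also have "\<dots> \<le> (1 - a) * norm (e + u')"
      using ih h1 a1 by (intro mult_left_mono) auto
    also have "\<dots> \<le> norm (e + u)" using gm eu unfolding a_def by simp
    finally show "(1/2 + (1/2)^(k + Suc d + 1)) * norm e \<le> norm (e + u)" using h2 by simp
  qed
qed

lemma span_finite_support:
  assumes "u \<in> span S"
  shows "\<exists>T. finite T \<and> T \<subseteq> S \<and> u \<in> span T"
proof -
  from assms obtain T r where T: "finite T" "T \<subseteq> S" "u = (\<Sum>a\<in>T. r a *\<^sub>R a)"
    unfolding span_explicit by blast
  have "u \<in> span T" unfolding T(3) by (intro span_sum span_scale span_base) auto
  then show ?thesis using T by blast
qed

lemma lb:
  assumes g: "goodseq w" and e: "e \<in> span (w ` {..<k})" and u: "u \<in> span (w ` {k..})"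
  shows "(1/2) * norm e \<le> norm (e + u)"
proof -
  obtain T where T: "finite T" "T \<subseteq> w ` {k..}" "u \<in> span T" using span_finite_support[OF u] by blast
  obtain C where C: "C \<subseteq> {k..}" "finite C" "T = w ` C" using finite_subset_image[OF T(1,2)] by blast
  define N where "N = Suc (Max (insert k C))"
  have "C \<subseteq> {k..<N}"
  proof
    fix c assume "c \<in> C"
    then have "c \<le> Max (insert k C)" using C(2) by simp
    then show "c \<in> {k..<N}" using \<open>c \<in> C\<close> C(1) N_def by auto
  qed
  moreover have "k \<le> N" unfolding N_def using C(2) by (simp add: le_SucI)
  ultimately have "C \<subseteq> {k..<k + (N - k)}" by simp
  then have "u \<in> span (w ` {k..<k + (N - k)})" using T(3) C(3) span_mono[of T] by (metis image_mono subsetD)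
  from lb_aux[OF g, rule_format, OF e this]
  have "(1/2 + (1/2)^(k+(N-k)+1)) * norm e \<le> norm (e + u)" .
  moreover have "(1/2) * norm e \<le> (1/2 + (1/2)^(k+(N-k)+1)) * norm e"
    by (intro mult_right_mono) auto
  ultimately show ?thesis by linarith
qed

lemma distbound:
  assumes g: "goodseq w" and w1: "\<forall>n. norm (w n) = 1" and m: "odd m"
    and y: "y \<in> closure (span (w ` {j. even j}))"
  shows "1/6 \<le> norm (w m - y)"
proof -
  have main: "1/6 \<le> norm (w m - y)" if y: "y \<in> span (w ` {j. even j})" for y
  proof -
    have "w ` {j. even j} \<subseteq> w ` {..<m} \<union> w ` {Suc m..}"
    proof
      fix v assume "v \<in> w ` {j. even j}"
      then obtain j where j: "even j" "v = w j" by auto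
      then have "j \<noteq> m" using m by auto
      then show "v \<in> w ` {..<m} \<union> w ` {Suc m..}" using j by (cases "j < m") auto
    qed
    then have "y \<in> span (w ` {..<m} \<union> w ` {Suc m..})" using y span_mono by blast
    then obtain y1 y2 where y12: "y1 \<in> span (w ` {..<m})" "y2 \<in> span (w ` {Suc m..})" "y = y1 + y2"
      unfolding span_Un by blast
    have "w m - y1 \<in> span (w ` {..<Suc m})"
    proof -
      have "w m \<in> span (w ` {..<Suc m})" by (intro span_base) auto
      moreover have "w ` {..<m} \<subseteq> w ` {..<Suc m}" by auto
      then have "y1 \<in> span (w ` {..<Suc m})" using y12(1) span_mono by blast
      ultimately show ?thesis by (rule span_diff)
    qed
    moreover have "- y2 \<in> span (w ` {Suc m..})" using y12(2) by (rule span_neg)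
    ultimately have A: "(1/2) * norm (w m - y1) \<le> norm ((w m - y1) + - y2)" by (rule lb[OF g])
    have "- y1 \<in> span (w ` {..<m})" using y12(1) by (rule span_neg)
    then have "(1 - (1/2)^(m+2)) * norm (- y1) \<le> norm (- y1 + 1 *\<^sub>R w m)"
      using g unfolding goodseq_def by blast
    moreover have "(1/2::real)^(m+2) \<le> 1/4"
    proof -
      have "(1/2::real)^m \<le> 1" by (rule power_le_one) auto
      then show ?thesis by (simp add: power_add)
    qed
    moreover have "- y1 + 1 *\<^sub>R w m = w m - y1" by simp
    moreover have "(3/4) * norm y1 \<le> (1 - (1/2)^(m+2)) * norm y1"
      using calculation(2) by (intro mult_right_mono) auto
    ultimately have B: "(3/4) * norm y1 \<le> norm (w m - y1)" by simp
    have C: "1 - norm y1 \<le> norm (w m - y1)" using norm_triangle_ineq2[of "w m" y1] w1 by simp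
    have "1/3 \<le> norm (w m - y1)" using B C by linarith
    then show ?thesis using A y12(3) by (simp add: algebra_simps)
  qed
  have "closure (span (w ` {j. even j})) \<subseteq> - ball (w m) (1/6)"
  proof (rule closure_minimal)
    show "span (w ` {j. even j}) \<subseteq> - ball (w m) (1/6)"
    proof
      fix x assume "x \<in> span (w ` {j. even j})"
      from main[OF this] show "x \<in> - ball (w m) (1/6)" by (simp add: dist_norm)
    qed
  qed (intro closed_Compl open_ball)
  then show ?thesis using y by (auto simp: dist_norm)
qed



lemma wnull_subseq:
  assumes "wnull z" "strict_mono r"
  shows "wnull (z \<circ> r)"
  using assms LIMSEQ_subseq_LIMSEQ unfolding wnull_def by (auto simp: o_def)

theorem lemma5p4:
  fixes x :: "nat \<Rightarrow> 'a::real_normed_vector" and l :: 'a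
  assumes "almost_overcomplete x"
    and "weakly_tendsto x l"
  shows "x \<longlonglongrightarrow> l"
proof (rule ccontr)
  assume nt: "\<not> x \<longlonglongrightarrow> l"
  then obtain r where r: "r > 0" "\<forall>N. \<exists>n\<ge>N. \<not> norm (x n - l) < r"
    unfolding LIMSEQ_iff by blast
  define S where "S = {n. r \<le> norm (x n - l)}"
  have "infinite S" unfolding infinite_nat_iff_unbounded_le S_def using r(2) by (auto simp: not_less)
  from infinite_enumerate[OF this] obtain \<rho> :: "nat \<Rightarrow> nat" where \<rho>: "strict_mono \<rho>" "\<forall>n. \<rho> n \<in> S" by blast
  define c where "c n = norm (x (\<rho> n) - l)" for n
  have cr: "r \<le> c n" for n using \<rho>(2) unfolding S_def c_def by auto
  have cpos: "c n > 0" for n using cr[of n] r(1) by linarith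
  define z where "z n = (1 / c n) *\<^sub>R (x (\<rho> n) - l)" for n
  have z1: "\<forall>n. norm (z n) = 1" using cpos unfolding z_def c_def by simp
  have xz: "x (\<rho> n) = l + c n *\<^sub>R z n" for n using cpos[of n] unfolding z_def by simp
  have wnz: "wnull z" unfolding wnull_def
  proof (intro allI impI)
    fix f :: "'a \<Rightarrow> real" assume f: "bounded_linear f"
    interpret f: bounded_linear f by fact
    have "(\<lambda>n. f (x n)) \<longlonglongrightarrow> f l" using assms(2) f unfolding weakly_tendsto_def by blast
    then have "(\<lambda>n. f (x (\<rho> n))) \<longlonglongrightarrow> f l" using LIMSEQ_subseq_LIMSEQ[OF _ \<rho>(1)] by (auto simp: o_def)
    then have lim: "(\<lambda>n. \<bar>f (x (\<rho> n)) - f l\<bar> / r) \<longlonglongrightarrow> \<bar>f l - f l\<bar> / r"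
      using r(1) by (intro tendsto_intros) auto
    show "(\<lambda>n. f (z n)) \<longlonglongrightarrow> 0"
    proof (rule Lim_null_comparison[OF _ lim[simplified]], rule always_eventually, rule allI)
      fix n
      have "f (z n) = (f (x (\<rho> n)) - f l) / c n" unfolding z_def by (simp add: f.scale f.diff)
      then have "norm (f (z n)) = \<bar>f (x (\<rho> n)) - f l\<bar> / c n" using cpos[of n] by simp
      also have "\<dots> \<le> \<bar>f (x (\<rho> n)) - f l\<bar> / r" using cr[of n] r(1) by (intro divide_left_mono) auto
      finally show "norm (f (z n)) \<le> \<bar>f (x (\<rho> n)) - f l\<bar> / r" .
    qed
  qed
  from construct[OF z1 wnz] obtain \<phi> where \<phi>: "strict_mono \<phi>" "goodseq (z \<circ> \<phi>)" by blast
  define w where "w = z \<circ> \<phi>"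
  have w1: "\<forall>n. norm (w n) = 1" using z1 unfolding w_def by simp
  define \<tau> where "\<tau> k = \<rho> (\<phi> (2 * k))" for k
  have sm2: "strict_mono (\<lambda>k::nat. 2 * k)" by (auto simp: strict_mono_def)
  have "strict_mono \<tau>" unfolding \<tau>_def using strict_mono_o[OF \<rho>(1) strict_mono_o[OF \<phi>(1) sm2]]
    by (simp add: o_def)
  then have "finite_codim (closure (span (range (x \<circ> \<tau>))))"
    using assms(1) unfolding almost_overcomplete_def by blast
  then obtain F where F: "finite F" "span (closure (span (range (x \<circ> \<tau>))) \<union> F) = UNIV"
    unfolding finite_codim_def by blast
  define W where "W = span (w ` {j. even j})"
  define V where "V = closure W"
  have sW: "subspace W" unfolding W_def by simp
  have sV: "subspace V" unfolding V_def by (rule subspace_closure_rn[OF sW])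
  have rng: "range (x \<circ> \<tau>) \<subseteq> span (insert l W)"
  proof
    fix v assume "v \<in> range (x \<circ> \<tau>)"
    then obtain k where k: "v = x (\<tau> k)" by auto
    have "w (2 * k) \<in> W" unfolding W_def by (intro span_base) auto
    then have "w (2 * k) \<in> span (insert l W)" using span_mono[of W "insert l W"] span_superset[of W] by blast
    moreover have "l \<in> span (insert l W)" by (intro span_base) simp
    ultimately have "l + c (\<phi> (2 * k)) *\<^sub>R w (2 * k) \<in> span (insert l W)"
      by (intro span_add span_scale)
    moreover have "v = l + c (\<phi> (2 * k)) *\<^sub>R w (2 * k)" unfolding k \<tau>_def w_def using xz by simp
    ultimately show "v \<in> span (insert l W)" by simp
  qed
  have Ysub: "closure (span (range (x \<circ> \<tau>))) \<subseteq> span (V \<union> insert l F)"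
  proof
    fix y assume "y \<in> closure (span (range (x \<circ> \<tau>)))"
    moreover have "closure (span (range (x \<circ> \<tau>))) \<subseteq> closure (span (insert l W))"
      using rng by (intro closure_mono span_minimal) auto
    ultimately have "y \<in> closure (span (insert l W))" by blast
    from closure_span_insert[OF sW this] obtain t where t: "y - t *\<^sub>R l \<in> V" unfolding V_def by blast
    have "y - t *\<^sub>R l \<in> span (V \<union> insert l F)" using t span_superset by blast
    moreover have "t *\<^sub>R l \<in> span (V \<union> insert l F)" by (intro span_scale span_base) simp
    ultimately have "(y - t *\<^sub>R l) + t *\<^sub>R l \<in> span (V \<union> insert l F)" by (rule span_add)
    then show "y \<in> span (V \<union> insert l F)" by simp
  qed
  have "closure (span (range (x \<circ> \<tau>))) \<union> F \<subseteq> span (V \<union> insert l F)"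
    using Ysub span_superset[of "V \<union> insert l F"] by blast
  then have "span (closure (span (range (x \<circ> \<tau>))) \<union> F) \<subseteq> span (V \<union> insert l F)"
    by (rule span_minimal) simp
  then have spU: "span (V \<union> insert l F) = UNIV" using F(2) by blast
  define u where "u i = w (2 * i + 1)" for i
  have sm3: "strict_mono (\<lambda>i::nat. 2 * i + 1)" by (auto simp: strict_mono_def)
  have "wnull u"
  proof -
    have "wnull (z \<circ> (\<phi> \<circ> (\<lambda>i. 2 * i + 1)))"
      by (rule wnull_subseq[OF wnz strict_mono_o[OF \<phi>(1) sm3]])
    then show ?thesis unfolding u_def w_def by (simp add: o_def)
  qed
  from fc_dist[OF _ sV spU this] F(1) have lim: "(\<lambda>i. infdist (u i) V) \<longlonglongrightarrow> 0" by simp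
  have ge: "1/6 \<le> infdist (u i) V" for i
  proof (rule infdist_geI)
    show "V \<noteq> {}" using subspace_0[OF sV] by blast
  next
    fix y assume "y \<in> V"
    then have "1/6 \<le> norm (w (2 * i + 1) - y)"
      using distbound[OF \<phi>(2)[folded w_def] w1] unfolding V_def W_def by simp
    then show "1/6 \<le> dist (u i) y" unfolding u_def by (simp add: dist_norm)
  qed
  have "eventually (\<lambda>i. infdist (u i) V < 1/6) sequentially"
    using lim by (rule order_tendstoD(2)) simp
  then obtain i where "infdist (u i) V < 1/6" using eventually_sequentially by auto
  with ge[of i] show False by linarith
qed

end
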